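(* Let $\mathcal{X}=\{x_k\}_{k=1}^\infty$ be a frame for the complex Hilbert space $\ell_2$. The following are equivalent: (1) $\mathcal{X}$ is injective; (2) $\overline{\mathrm{span}}\{\tilde{x}_k\}_{k=1}^\infty=\tilde{\mathbb{H}}$.
   Context: A family $\{x_k\}$ is called injective if whenever a Hilbert–Schmidt self-adjoint operator $T$ on $\ell_2$ satisfies $\langle Tx_k,x_k\rangle=0$ for all $k$, then $T=0$. Let $\tilde{\mathbb{H}}=\left(\sum_{i=1}^\infty\oplus\ell_2\right)_{\ell_2}$ be the $\ell_2$-direct sum of countably many copies of real $\ell_2$, with elements $(\vec{x}_1,\vec{x}_2,\dots)$ and inner product $\sum_i\langle\vec{x}_i,\vec{y}_i\rangle$. For $x=(x_i)_{i=1}^\infty\in\ell_2$ (complex), define $\tilde{x}=(\vec{x}_1,\vec{x}_2,\dots)\in\tilde{\mathbb{H}}$ with $\vec{x}_n=(|x_n|^2,\mathrm{Re}(\bar{x}_nx_{n+1}),\mathrm{Im}(\bar{x}_nx_{n+1}),\mathrm{Re}(\bar{x}_nx_{n+2}),\mathrm{Im}(\bar{x}_nx_{n+2}),\dots)$. *)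

theory Defs
  imports "HOL-Analysis.Analysis"
begin

text \<open>Complex l2 = square-summable sequences nat => complex (0-indexed).\<close>
definition l2 :: "(nat \<Rightarrow> complex) set" where
  "l2 = {x. summable (\<lambda>i. (cmod (x i))^2)}"

definition l2norm2 :: "(nat \<Rightarrow> complex) \<Rightarrow> real" where
  "l2norm2 x = (\<Sum>i. (cmod (x i))^2)"

definition l2inner :: "(nat \<Rightarrow> complex) \<Rightarrow> (nat \<Rightarrow> complex) \<Rightarrow> complex" where
  "l2inner x y = (\<Sum>i. x i * cnj (y i))"

definition is_frame :: "(nat \<Rightarrow> nat \<Rightarrow> complex) \<Rightarrow> bool" where
  "is_frame X \<longleftrightarrow> (\<forall>k. X k \<in> l2) \<and>
     (\<exists>A B. 0 < A \<and> A \<le> B \<and>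
       (\<forall>x\<in>l2. summable (\<lambda>k. (cmod (l2inner x (X k)))^2) \<and>
          A * l2norm2 x \<le> (\<Sum>k. (cmod (l2inner x (X k)))^2) \<and>
          (\<Sum>k. (cmod (l2inner x (X k)))^2) \<le> B * l2norm2 x))"

text \<open>A Hilbert-Schmidt self-adjoint operator on l2, given by its matrix
  t i j = <T e_j, e_i> w.r.t. the standard basis: square-summable entries and
  Hermitian symmetry.\<close>
definition hs_selfadjoint :: "(nat \<Rightarrow> nat \<Rightarrow> complex) \<Rightarrow> bool" where
  "hs_selfadjoint t \<longleftrightarrow> (\<forall>i j. t j i = cnj (t i j)) \<and>
     (\<lambda>(i,j). (cmod (t i j))^2) summable_on UNIV"

text \<open>Quadratic form <T x, x> with (T x)_i = sum_j t i j * x j.\<close>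
definition quad_form :: "(nat \<Rightarrow> nat \<Rightarrow> complex) \<Rightarrow> (nat \<Rightarrow> complex) \<Rightarrow> complex" where
  "quad_form t x = (\<Sum>i. (\<Sum>j. t i j * x j) * cnj (x i))"

definition injective_family :: "(nat \<Rightarrow> nat \<Rightarrow> complex) \<Rightarrow> bool" where
  "injective_family X \<longleftrightarrow>
     (\<forall>t. hs_selfadjoint t \<and> (\<forall>k. quad_form t (X k) = 0) \<longrightarrow> (\<forall>i j. t i j = 0))"

text \<open>The space tilde H = l2-direct sum of copies of real l2, elements v with
  v n = n-th block (a real sequence).\<close>
definition Htil :: "(nat \<Rightarrow> nat \<Rightarrow> real) set" where
  "Htil = {v. (\<lambda>(n,j). (v n j)^2) summable_on UNIV}"

definition Htil_norm :: "(nat \<Rightarrow> nat \<Rightarrow> real) \<Rightarrow> real" where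
  "Htil_norm v = sqrt (\<Sum>\<^sub>\<infinity>(n,j)\<in>UNIV. (v n j)^2)"

text \<open>tilde x: block n is (|x_n|^2, Re(cnj x_n x_{n+1}), Im(cnj x_n x_{n+1}),
  Re(cnj x_n x_{n+2}), ...); coordinate 0 is |x_n|^2, coordinate 2m-1 is
  Re(cnj x_n x_{n+m}) and coordinate 2m is Im(cnj x_n x_{n+m}) for m >= 1.\<close>
definition tilde :: "(nat \<Rightarrow> complex) \<Rightarrow> nat \<Rightarrow> nat \<Rightarrow> real" where
  "tilde x n j =
     (if j = 0 then (cmod (x n))^2
      else if odd j then Re (cnj (x n) * x (n + (j + 1) div 2))
      else Im (cnj (x n) * x (n + (j + 1) div 2)))"

definition closed_span_is_Htil :: "(nat \<Rightarrow> nat \<Rightarrow> complex) \<Rightarrow> bool" where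
  "closed_span_is_Htil X \<longleftrightarrow>
     (\<forall>v\<in>Htil. \<forall>e>0. \<exists>F c. finite F \<and>
        Htil_norm (\<lambda>n j. v n j - (\<Sum>k\<in>F. c k * tilde (X k) n j)) < e)"

end

theory Submission
  imports Defs
begin


definition sqs :: "(nat \<times> nat \<Rightarrow> real) \<Rightarrow> bool" where
  "sqs f \<longleftrightarrow> (\<lambda>p. (f p)^2) summable_on UNIV"

lemma sqs_prod: assumes "sqs f" "sqs g" shows "(\<lambda>p. f p * g p) summable_on UNIV"
proof -
  have s: "(\<lambda>p. (f p)^2 + (g p)^2) summable_on UNIV"
    using assms unfolding sqs_def by (intro summable_on_add)
  have "(\<lambda>p. norm (f p * g p)) summable_on UNIV"
  proof (rule summable_on_comparison_test[OF s])
    fix p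
    have "2 * (\<bar>f p\<bar> * \<bar>g p\<bar>) \<le> (f p)^2 + (g p)^2"
      using sum_squares_bound[of "\<bar>f p\<bar>" "\<bar>g p\<bar>"] by simp
    moreover have "0 \<le> \<bar>f p\<bar> * \<bar>g p\<bar>" by simp
    ultimately show "norm (f p * g p) \<le> (f p)^2 + (g p)^2"
      unfolding real_norm_def abs_mult by linarith
  qed simp
  then show ?thesis using summable_on_iff_abs_summable_on_real by blast
qed

lemma sqs_add: assumes "sqs f" "sqs g" shows "sqs (\<lambda>p. f p + g p)"
proof -
  have "(\<lambda>p. (f p)^2 + 2 * (f p * g p) + (g p)^2) summable_on UNIV"
    using assms sqs_prod[OF assms] unfolding sqs_def
    by (intro summable_on_add summable_on_cmult_right)
  moreover have "(\<lambda>p. (f p + g p)^2) = (\<lambda>p. (f p)^2 + 2 * (f p * g p) + (g p)^2)"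
    by (auto simp: power2_sum algebra_simps)
  ultimately show ?thesis unfolding sqs_def by simp
qed

lemma sqs_scale: assumes "sqs f" shows "sqs (\<lambda>p. c * f p)"
  using summable_on_cmult_right[OF assms[unfolded sqs_def], of "c^2"]
  unfolding sqs_def by (simp add: power_mult_distrib)

lemma sqs_minus: assumes "sqs f" shows "sqs (\<lambda>p. - f p)"
  using sqs_scale[OF assms, of "-1"] by simp

lemma sqs_diff: assumes "sqs f" "sqs g" shows "sqs (\<lambda>p. f p - g p)"
  using sqs_add[OF assms(1) sqs_minus[OF assms(2)]] by simp

lemma sqs_zero: "sqs (\<lambda>p. 0)" unfolding sqs_def by simp

lemma nonneg_sum_le_infsum:
  fixes f :: "'a \<Rightarrow> real"
  assumes "f summable_on UNIV" "\<And>x. f x \<ge> 0" "finite F"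
  shows "sum f F \<le> infsum f UNIV"
proof -
  have "infsum f F \<le> infsum f UNIV"
    by (rule infsum_mono_neutral) (use assms in auto)
  then show ?thesis using assms by simp
qed

typedef hv = "{f :: nat \<times> nat \<Rightarrow> real. sqs f}"
  morphisms vec Abs_hv
  by (rule exI[of _ "\<lambda>_. 0"]) (simp add: sqs_zero)

lemma sqs_vec: "sqs (vec x)" using vec by simp

lemma vec_Abs: "sqs f \<Longrightarrow> vec (Abs_hv f) = f"
  by (simp add: Abs_hv_inverse)

lemma hv_eqI: "(\<And>p. vec x p = vec y p) \<Longrightarrow> x = y"
  by (metis ext vec_inject)

instantiation hv :: real_inner
begin
definition zero_hv :: hv where "zero_hv = Abs_hv (\<lambda>_. 0)"
definition plus_hv :: "hv \<Rightarrow> hv \<Rightarrow> hv" where "plus_hv x y = Abs_hv (\<lambda>p. vec x p + vec y p)"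
definition minus_hv :: "hv \<Rightarrow> hv \<Rightarrow> hv" where "minus_hv x y = Abs_hv (\<lambda>p. vec x p - vec y p)"
definition uminus_hv :: "hv \<Rightarrow> hv" where "uminus_hv x = Abs_hv (\<lambda>p. - vec x p)"
definition scaleR_hv :: "real \<Rightarrow> hv \<Rightarrow> hv" where "scaleR_hv r x = Abs_hv (\<lambda>p. r * vec x p)"
definition inner_hv :: "hv \<Rightarrow> hv \<Rightarrow> real" where "inner_hv x y = infsum (\<lambda>p. vec x p * vec y p) UNIV"
definition norm_hv :: "hv \<Rightarrow> real" where "norm_hv x = sqrt (inner x x)"
definition dist_hv :: "hv \<Rightarrow> hv \<Rightarrow> real" where "dist_hv x y = norm (x - y)"
definition sgn_hv :: "hv \<Rightarrow> hv" where "sgn_hv x = inverse (norm x) *\<^sub>R x"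
definition uniformity_hv :: "(hv \<times> hv) filter" where
  "uniformity_hv = (INF e\<in>{0 <..}. principal {(x, y). dist x y < e})"
definition open_hv :: "hv set \<Rightarrow> bool" where
  "open_hv U = (\<forall>x\<in>U. eventually (\<lambda>(x', y). x' = x \<longrightarrow> y \<in> U) uniformity)"

lemma vec_zero[simp]: "vec (0::hv) = (\<lambda>_. 0)"
  by (simp add: zero_hv_def vec_Abs sqs_zero)
lemma vec_plus[simp]: "vec (x + y) = (\<lambda>p. vec x p + vec y p)"
  by (simp add: plus_hv_def vec_Abs sqs_add sqs_vec)
lemma vec_minus[simp]: "vec (x - y) = (\<lambda>p. vec x p - vec y p)"
  by (simp add: minus_hv_def vec_Abs sqs_diff sqs_vec)
lemma vec_uminus[simp]: "vec (- x) = (\<lambda>p. - vec x p)"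
  by (simp add: uminus_hv_def vec_Abs sqs_minus sqs_vec)
lemma vec_scaleR[simp]: "vec (r *\<^sub>R x) = (\<lambda>p. r * vec x p)"
  by (simp add: scaleR_hv_def vec_Abs sqs_scale sqs_vec)

lemma inner_summable: "(\<lambda>p. vec x p * vec y p) summable_on UNIV"
  by (rule sqs_prod[OF sqs_vec sqs_vec])

instance
proof
  fix x y z :: hv and a b :: real
  show "x + y + z = x + (y + z)" by (rule hv_eqI) simp
  show "x + y = y + x" by (rule hv_eqI) simp
  show "0 + x = x" by (rule hv_eqI) simp
  show "- x + x = 0" by (rule hv_eqI) simp
  show "x - y = x + - y" by (rule hv_eqI) simp
  show "a *\<^sub>R (x + y) = a *\<^sub>R x + a *\<^sub>R y" by (rule hv_eqI) (simp add: algebra_simps)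
  show "(a + b) *\<^sub>R x = a *\<^sub>R x + b *\<^sub>R x" by (rule hv_eqI) (simp add: algebra_simps)
  show "a *\<^sub>R b *\<^sub>R x = (a * b) *\<^sub>R x" by (rule hv_eqI) simp
  show "1 *\<^sub>R x = x" by (rule hv_eqI) simp
  show "sgn x = inverse (norm x) *\<^sub>R x" by (simp add: sgn_hv_def)
  show "dist x y = norm (x - y)" by (simp add: dist_hv_def)
  show "(uniformity :: (hv \<times> hv) filter) = (INF e\<in>{0 <..}. principal {(x, y). dist x y < e})"
    by (simp add: uniformity_hv_def)
  show "\<And>U. open U = (\<forall>x\<in>U. eventually (\<lambda>(x', y). x' = x \<longrightarrow> y \<in> U) (uniformity :: (hv \<times> hv) filter))"
    by (simp add: open_hv_def)
  show "inner x y = inner y x" by (simp add: inner_hv_def mult.commute)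
  show "inner (x + y) z = inner x z + inner y z"
    by (simp add: inner_hv_def distrib_right infsum_add inner_summable)
  show "inner (a *\<^sub>R x) y = a * inner x y"
    by (simp add: inner_hv_def mult.assoc infsum_cmult_right' )
  show "0 \<le> inner x x" by (simp add: inner_hv_def infsum_nonneg)
  show "norm x = sqrt (inner x x)" by (simp add: norm_hv_def)
  show "(inner x x = 0) = (x = 0)"
  proof
    assume h: "inner x x = 0"
    show "x = 0"
    proof (rule hv_eqI)
      fix p
      have "sum (\<lambda>p. vec x p * vec x p) {p} \<le> inner x x"
        unfolding inner_hv_def by (rule nonneg_sum_le_infsum) (auto simp: inner_summable)
      then have "vec x p * vec x p \<le> 0" using h by simp
      then have "vec x p * vec x p = 0" using zero_le_square[of "vec x p"] by linarith
      then show "vec x p = vec 0 p" by simp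
    qed
  qed (simp add: inner_hv_def)
qed
end



lemma inner_hv_eq: "inner x y = infsum (\<lambda>p. vec x p * vec y p) UNIV"
  by (simp add: inner_hv_def)

lemma norm_sq: "(norm x)^2 = infsum (\<lambda>p. (vec x p)^2) UNIV"
  unfolding power2_norm_eq_inner inner_hv_def by (simp add: power2_eq_square)

lemma finsum_sq_le: "finite F \<Longrightarrow> (\<Sum>p\<in>F. (vec x p)^2) \<le> (norm x)^2"
  unfolding norm_sq
  by (rule nonneg_sum_le_infsum) (use sqs_vec[of x] in \<open>auto simp: sqs_def\<close>)

lemma coord_sq_le: "(vec x p)^2 \<le> (norm x)^2"
  using finsum_sq_le[of "{p}" x] by simp

lemma coord_le: "\<bar>vec x p\<bar> \<le> norm x"
  using coord_sq_le[of x p] abs_le_square_iff[of "vec x p" "norm x"] by simp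

instance hv :: complete_space
proof
  fix X :: "nat \<Rightarrow> hv"
  assume C: "Cauchy X"
  have cc: "convergent (\<lambda>n. vec (X n) p)" for p
  proof -
    have "Cauchy (\<lambda>n. vec (X n) p)"
    proof (rule metric_CauchyI)
      fix e :: real assume "e > 0"
      then obtain M where M: "\<forall>m\<ge>M. \<forall>n\<ge>M. dist (X m) (X n) < e" using metric_CauchyD[OF C] by blast
      show "\<exists>M. \<forall>m\<ge>M. \<forall>n\<ge>M. dist (vec (X m) p) (vec (X n) p) < e"
      proof (intro exI allI impI)
        fix m n assume "m \<ge> M" "n \<ge> M"
        then have "dist (X m) (X n) < e" using M by blast
        moreover have "\<bar>vec (X m - X n) p\<bar> \<le> norm (X m - X n)" by (rule coord_le)
        ultimately show "dist (vec (X m) p) (vec (X n) p) < e"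
          by (simp add: dist_real_def dist_norm)
      qed
    qed
    then show ?thesis by (simp add: Cauchy_convergent_iff)
  qed
  define L where "L p = lim (\<lambda>n. vec (X n) p)" for p
  have LL: "(\<lambda>n. vec (X n) p) \<longlonglongrightarrow> L p" for p
    using cc[of p] unfolding L_def by (simp add: convergent_LIMSEQ_iff)
  have key: "\<exists>M. \<forall>n\<ge>M. sqs (\<lambda>p. vec (X n) p - L p) \<and>
        infsum (\<lambda>p. (vec (X n) p - L p)^2) UNIV \<le> e^2" if e: "e > 0" for e
  proof -
    obtain M where M: "\<forall>m\<ge>M. \<forall>n\<ge>M. dist (X m) (X n) < e" using metric_CauchyD[OF C e] by blast
    have fin: "(\<Sum>p\<in>F. (vec (X n) p - L p)^2) \<le> e^2" if "n \<ge> M" "finite F" for n F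
    proof (rule LIMSEQ_le_const2)
      show "(\<lambda>m. \<Sum>p\<in>F. (vec (X n) p - vec (X m) p)^2) \<longlonglongrightarrow> (\<Sum>p\<in>F. (vec (X n) p - L p)^2)"
        by (intro tendsto_intros LL)
      show "\<exists>N. \<forall>m\<ge>N. (\<Sum>p\<in>F. (vec (X n) p - vec (X m) p)^2) \<le> e^2"
      proof (intro exI allI impI)
        fix m assume "m \<ge> M"
        have "(\<Sum>p\<in>F. (vec (X n) p - vec (X m) p)^2) \<le> (norm (X n - X m))^2"
          using finsum_sq_le[OF \<open>finite F\<close>, of "X n - X m"] by simp
        also have "\<dots> \<le> e^2" using M \<open>m \<ge> M\<close> \<open>n \<ge> M\<close>
          by (intro power_mono) (auto simp: dist_norm less_imp_le)
        finally show "(\<Sum>p\<in>F. (vec (X n) p - vec (X m) p)^2) \<le> e^2" .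
      qed
    qed
    show ?thesis
    proof (intro exI allI impI conjI)
      fix n assume n: "n \<ge> M"
      have bdd: "bdd_above (sum (\<lambda>p. (vec (X n) p - L p)^2) ` {F. F \<subseteq> UNIV \<and> finite F})"
        using fin[OF n] by (auto intro!: bdd_aboveI)
      show "sqs (\<lambda>p. vec (X n) p - L p)" unfolding sqs_def
        by (rule nonneg_bdd_above_summable_on[OF _ bdd]) simp
      have "infsum (\<lambda>p. (vec (X n) p - L p)^2) UNIV =
          (SUP F\<in>{F. finite F \<and> F \<subseteq> UNIV}. sum (\<lambda>p. (vec (X n) p - L p)^2) F)"
        by (rule nonneg_bdd_above_infsum[OF _ bdd]) simp
      also have "\<dots> \<le> e^2" by (rule cSUP_least) (auto intro: fin[OF n])
      finally show "infsum (\<lambda>p. (vec (X n) p - L p)^2) UNIV \<le> e^2" .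
    qed
  qed
  obtain M0 where M0: "sqs (\<lambda>p. vec (X M0) p - L p)" using key[of 1] by auto
  have sL: "sqs L"
    using sqs_diff[OF sqs_vec M0, of "X M0"] by simp
  define Lh where "Lh = Abs_hv L"
  have vL: "vec Lh = L" unfolding Lh_def using sL by (simp add: vec_Abs)
  have "X \<longlonglongrightarrow> Lh"
  proof (rule metric_LIMSEQ_I)
    fix r :: real assume r: "r > 0"
    obtain M where M: "\<forall>n\<ge>M. infsum (\<lambda>p. (vec (X n) p - L p)^2) UNIV \<le> (r/2)^2"
      using key[of "r/2"] r by auto
    show "\<exists>no. \<forall>n\<ge>no. dist (X n) Lh < r"
    proof (intro exI allI impI)
      fix n assume "n \<ge> M"
      have "(norm (X n - Lh))^2 = infsum (\<lambda>p. (vec (X n) p - L p)^2) UNIV"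
        unfolding norm_sq by (simp add: vL)
      also have "\<dots> \<le> (r/2)^2" using M \<open>n \<ge> M\<close> by blast
      finally have "norm (X n - Lh) \<le> r/2"
        using r by (simp add: power2_le_iff_abs_le) 
      then show "dist (X n) Lh < r" using r by (simp add: dist_norm)
    qed
  qed
  then show "convergent X" by (auto simp: convergent_def)
qed



lemma orth_from_min:
  fixes u b :: "'a::real_inner"
  assumes "\<And>t. (norm u)^2 \<le> (norm (u - t *\<^sub>R b))^2"
  shows "inner u b = 0"
proof (rule ccontr)
  assume c: "inner u b \<noteq> 0"
  define c' where "c' = inner u b"
  define N where "N = (norm b)^2 + 1"
  have N: "N > 0" using zero_le_power2[of "norm b"] unfolding N_def by linarith
  define t where "t = c' / N"
  have "(norm (u - t *\<^sub>R b))^2 = (norm u)^2 - 2 * t * c' + t^2 * (norm b)^2"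
    unfolding power2_norm_eq_inner
    by (simp add: inner_diff_left inner_diff_right inner_commute c'_def power2_eq_square algebra_simps)
  with assms[of t] have "2 * t * c' \<le> t^2 * (norm b)^2" by simp
  then have "2 * c'^2 / N \<le> c'^2 * (norm b)^2 / N^2" by (simp add: t_def power2_eq_square field_simps)
  then have "2 * c'^2 * N \<le> c'^2 * (norm b)^2" using N by (simp add: field_simps power2_eq_square)
  moreover have "c'^2 > 0" using c by (simp add: c'_def)
  ultimately have "2 * N \<le> (norm b)^2" by simp
  then show False using zero_le_power2[of "norm b"] by (simp add: N_def algebra_simps)
qed

lemma exists_orth:
  fixes v :: "'a::{real_inner,complete_space}"
  assumes nv: "v \<notin> closure (span B)"
  shows "\<exists>u. u \<noteq> 0 \<and> (\<forall>b\<in>B. inner u b = 0)"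
proof -
  let ?S = "span B"
  have ne: "?S \<noteq> {}" using span_zero by blast
  define d where "d = infdist v ?S"
  have dpos: "d > 0"
    using nv ne in_closure_iff_infdist_zero[of ?S v] infdist_nonneg[of v ?S] unfolding d_def by linarith
  have dle: "d \<le> norm (v - s)" if "s \<in> ?S" for s
    using infdist_le[OF that, of v] by (simp add: d_def dist_norm)
  have ex: "\<exists>s\<in>?S. (norm (v - s))^2 < d^2 + 1 / (real n + 1)" for n
  proof -
    have "d < sqrt (d^2 + 1 / (real n + 1))"
      using dpos by (intro real_less_rsqrt) simp
    then have "(INF a\<in>?S. dist v a) < sqrt (d^2 + 1 / (real n + 1))"
      using ne by (simp add: d_def infdist_notempty)
    then obtain s where s: "s \<in> ?S" "dist v s < sqrt (d^2 + 1 / (real n + 1))"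
      using ne by (subst (asm) cINF_less_iff) auto
    then have "(norm (v - s))^2 < (sqrt (d^2 + 1 / (real n + 1)))^2"
      by (intro power_strict_mono) (auto simp: dist_norm)
    then show ?thesis using s(1) by (auto simp: add_pos_nonneg)
  qed
  then obtain s where s: "\<And>n. s n \<in> ?S" "\<And>n. (norm (v - s n))^2 < d^2 + 1 / (real n + 1)"
    by metis
  have par: "(norm (s m - s n))^2 \<le> 2 / (real m + 1) + 2 / (real n + 1)" for m n
  proof -
    have mid: "(1/2) *\<^sub>R (s m + s n) \<in> ?S" using s(1) by (intro span_mul span_add) auto
    have "d \<le> norm (v - (1/2) *\<^sub>R (s m + s n))" by (rule dle[OF mid])
    then have "4 * d^2 \<le> (norm (2 *\<^sub>R (v - (1/2) *\<^sub>R (s m + s n))))^2"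
      using dpos by (simp add: power_mult_distrib power_mono)
    also have "2 *\<^sub>R (v - (1/2) *\<^sub>R (s m + s n)) = (v - s m) + (v - s n)"
      by (simp add: algebra_simps scaleR_2)
    finally have A: "4 * d^2 \<le> (norm ((v - s m) + (v - s n)))^2" .
    have P: "(norm ((v - s m) - (v - s n)))^2 + (norm ((v - s m) + (v - s n)))^2
          = 2 * (norm (v - s m))^2 + 2 * (norm (v - s n))^2"
      by (simp add: power2_norm_eq_inner inner_add_left inner_add_right inner_diff_left inner_diff_right
          inner_commute algebra_simps)
    have "(v - s m) - (v - s n) = s n - s m" by simp
    then have "(norm (s m - s n))^2 = (norm ((v - s m) - (v - s n)))^2" by (simp add: norm_minus_commute)
    then show ?thesis using P A s(2)[of m] s(2)[of n] by linarith
  qed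
  have "Cauchy s"
  proof (rule metric_CauchyI)
    fix e :: real assume e: "e > 0"
    obtain M :: nat where M: "4 / e^2 < real M" using reals_Archimedean2 by blast
    show "\<exists>M. \<forall>m\<ge>M. \<forall>n\<ge>M. dist (s m) (s n) < e"
    proof (intro exI allI impI)
      fix m n assume mn: "m \<ge> M" "n \<ge> M"
      have "2 / (real m + 1) \<le> 2 / (real M + 1)" "2 / (real n + 1) \<le> 2 / (real M + 1)"
        using mn by (auto intro!: divide_left_mono)
      moreover have "4 / (real M + 1) < e^2"
      proof -
        have "4 < real M * e^2" using M e by (simp add: field_simps)
        moreover have "0 < e^2" using e by simp
        moreover have "(real M + 1) * e^2 = real M * e^2 + e^2" by (simp add: algebra_simps)
        ultimately have "4 < (real M + 1) * e^2" by linarith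
        then show ?thesis by (simp add: field_simps)
      qed
      ultimately have "(norm (s m - s n))^2 < e^2" using par[of m n] by linarith
      then show "dist (s m) (s n) < e" using e by (simp add: dist_norm power_less_imp_less_base)
    qed
  qed
  then obtain p where p: "s \<longlonglongrightarrow> p" using Cauchy_convergent_iff convergent_def by blast
  define u where "u = v - p"
  have inv: "(\<lambda>n. 1 / (real n + 1)) \<longlonglongrightarrow> 0"
    using LIMSEQ_inverse_real_of_nat by (simp add: inverse_eq_divide add.commute)
  have nu1: "(norm u)^2 \<le> d^2"
  proof (rule LIMSEQ_le)
    show "(\<lambda>n. (norm (v - s n))^2) \<longlonglongrightarrow> (norm u)^2" unfolding u_def by (intro tendsto_intros p)
    show "(\<lambda>n. d^2 + 1 / (real n + 1)) \<longlonglongrightarrow> d^2" using tendsto_add[OF tendsto_const inv] by simp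
    show "\<exists>N. \<forall>n\<ge>N. (norm (v - s n))^2 \<le> d^2 + 1 / (real n + 1)" using s(2) less_imp_le by blast
  qed
  have nu2: "d^2 \<le> (norm (u - t *\<^sub>R b))^2" if "b \<in> B" for b t
  proof (rule LIMSEQ_le)
    show "(\<lambda>n. d^2) \<longlonglongrightarrow> d^2" by simp
    show "(\<lambda>n. (norm (v - (s n + t *\<^sub>R b)))^2) \<longlonglongrightarrow> (norm (u - t *\<^sub>R b))^2"
      unfolding u_def using tendsto_intros(1-100) p by (auto intro!: tendsto_intros simp: algebra_simps)
    have "s n + t *\<^sub>R b \<in> ?S" for n by (rule span_add[OF s(1)]) (intro span_mul span_base that)
    then show "\<exists>N. \<forall>n\<ge>N. d^2 \<le> (norm (v - (s n + t *\<^sub>R b)))^2"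
      using dle dpos by (auto intro!: power_mono)
  qed
  have nu3: "d^2 \<le> (norm u)^2"
  proof (rule LIMSEQ_le)
    show "(\<lambda>n. d^2) \<longlonglongrightarrow> d^2" by simp
    show "(\<lambda>n. (norm (v - s n))^2) \<longlonglongrightarrow> (norm u)^2" unfolding u_def by (intro tendsto_intros p)
    show "\<exists>N. \<forall>n\<ge>N. d^2 \<le> (norm (v - s n))^2"
      using dle s(1) dpos by (auto intro!: power_mono)
  qed
  have nu: "(norm u)^2 = d^2" using nu1 nu3 by simp
  show ?thesis
  proof (intro exI conjI ballI)
    show "u \<noteq> 0" using nu dpos by auto
    fix b assume b: "b \<in> B"
    show "inner u b = 0"
      by (rule orth_from_min) (use nu nu2[OF b] in simp)
  qed
qed




lemma three_has_sum:
  fixes f :: "'i \<Rightarrow> 'a::topological_comm_monoid_add"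
  assumes inj: "inj h0" "inj h1" "inj h2"
    and disj: "range h0 \<inter> range h1 = {}" "range h0 \<inter> range h2 = {}" "range h1 \<inter> range h2 = {}"
    and cov: "\<And>x. x \<in> range h0 \<or> x \<in> range h1 \<or> x \<in> range h2"
    and s: "((f \<circ> h0) has_sum a) UNIV" "((f \<circ> h1) has_sum b) UNIV" "((f \<circ> h2) has_sum c) UNIV"
  shows "(f has_sum (a + b + c)) UNIV"
proof -
  have a: "(f has_sum a) (range h0)" using s(1) has_sum_reindex[OF inj(1)] by blast
  have b: "(f has_sum b) (range h1)" using s(2) has_sum_reindex[OF inj(2)] by blast
  have c: "(f has_sum c) (range h2)" using s(3) has_sum_reindex[OF inj(3)] by blast
  have "(f has_sum (a + b)) (range h0 \<union> range h1)" by (rule has_sum_Un_disjoint[OF a b disj(1)])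
  then have "(f has_sum (a + b + c)) ((range h0 \<union> range h1) \<union> range h2)"
    by (rule has_sum_Un_disjoint[OF _ c]) (use disj in auto)
  moreover have "(range h0 \<union> range h1) \<union> range h2 = UNIV" using cov by auto
  ultimately show ?thesis by simp
qed

lemma three_summable_parts:
  fixes f :: "'i \<Rightarrow> 'a::banach"
  assumes "f summable_on UNIV" "inj h"
  shows "(f \<circ> h) summable_on UNIV"
  using summable_on_subset_banach[OF assms(1), of "range h"] summable_on_reindex[OF assms(2)] by auto

lemma three_infsum:
  fixes f :: "'i \<Rightarrow> 'a::banach"
  assumes inj: "inj h0" "inj h1" "inj h2"
    and disj: "range h0 \<inter> range h1 = {}" "range h0 \<inter> range h2 = {}" "range h1 \<inter> range h2 = {}"
    and cov: "\<And>x. x \<in> range h0 \<or> x \<in> range h1 \<or> x \<in> range h2"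
    and s: "(f \<circ> h0) summable_on UNIV" "(f \<circ> h1) summable_on UNIV" "(f \<circ> h2) summable_on UNIV"
  shows "f summable_on UNIV \<and> infsum f UNIV = infsum (f \<circ> h0) UNIV + infsum (f \<circ> h1) UNIV + infsum (f \<circ> h2) UNIV"
  using three_has_sum[OF inj disj cov has_sum_infsum[OF s(1)] has_sum_infsum[OF s(2)] has_sum_infsum[OF s(3)]]
  by (auto simp: summable_on_def infsumI)

definition "bk0 = (\<lambda>n::nat. (n, 0::nat))"
definition "bk1 = (\<lambda>(n::nat, m::nat). (n, 2*m+1))"
definition "bk2 = (\<lambda>(n::nat, m::nat). (n, 2*m+2))"

lemma bk_props: "inj bk0" "inj bk1" "inj bk2"
  "range bk0 \<inter> range bk1 = {}" "range bk0 \<inter> range bk2 = {}" "range bk1 \<inter> range bk2 = {}"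
  "\<And>x. x \<in> range bk0 \<or> x \<in> range bk1 \<or> x \<in> range bk2"
proof -
  show "inj bk0" "inj bk1" "inj bk2" by (auto simp: inj_def bk0_def bk1_def bk2_def)
  show "range bk0 \<inter> range bk1 = {}" "range bk0 \<inter> range bk2 = {}" "range bk1 \<inter> range bk2 = {}"
    by (auto simp: bk0_def bk1_def bk2_def) presburger
  fix x :: "nat \<times> nat"
  obtain n j where x: "x = (n, j)" by (cases x)
  show "x \<in> range bk0 \<or> x \<in> range bk1 \<or> x \<in> range bk2"
  proof (cases "j = 0")
    case True then show ?thesis by (auto simp: x bk0_def)
  next
    case False
    show ?thesis
    proof (cases "odd j")
      case True
      then have "x = bk1 (n, (j - 1) div 2)" by (auto simp: x bk1_def)
      then show ?thesis by blast
    next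
      case e: False
      then have "x = bk2 (n, (j - 2) div 2)" using False by (auto simp: x bk2_def)
      then show ?thesis by blast
    qed
  qed
qed

definition "pr0 = (\<lambda>n::nat. (n, n))"
definition "pr1 = (\<lambda>(n::nat, m::nat). (n, n+m+1))"
definition "pr2 = (\<lambda>(n::nat, m::nat). (n+m+1, n))"

lemma pr_props: "inj pr0" "inj pr1" "inj pr2"
  "range pr0 \<inter> range pr1 = {}" "range pr0 \<inter> range pr2 = {}" "range pr1 \<inter> range pr2 = {}"
  "\<And>x. x \<in> range pr0 \<or> x \<in> range pr1 \<or> x \<in> range pr2"
proof -
  show "inj pr0" "inj pr1" "inj pr2" by (auto simp: inj_def pr0_def pr1_def pr2_def)
  show "range pr0 \<inter> range pr1 = {}" "range pr0 \<inter> range pr2 = {}" "range pr1 \<inter> range pr2 = {}"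
    by (auto simp: pr0_def pr1_def pr2_def)
  fix x :: "nat \<times> nat"
  obtain i j where x: "x = (i, j)" by (cases x)
  consider "i = j" | "i < j" | "j < i" by linarith
  then show "x \<in> range pr0 \<or> x \<in> range pr1 \<or> x \<in> range pr2"
  proof cases
    case 1 then show ?thesis by (auto simp: x pr0_def)
  next
    case 2
    then have "x = pr1 (i, j - i - 1)" by (auto simp: x pr1_def)
    then show ?thesis by blast
  next
    case 3
    then have "x = pr2 (j, i - j - 1)" by (auto simp: x pr2_def)
    then show ?thesis by blast
  qed
qed

lemmas bk_infsum = three_infsum[OF bk_props]
lemmas pr_infsum = three_infsum[OF pr_props]

lemma bk_parts: fixes f :: "nat \<times> nat \<Rightarrow> 'a::banach" assumes "f summable_on UNIV"
  shows "(f \<circ> bk0) summable_on UNIV" "(f \<circ> bk1) summable_on UNIV" "(f \<circ> bk2) summable_on UNIV"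
  using three_summable_parts[OF assms] bk_props by auto

lemma pr_parts: fixes f :: "nat \<times> nat \<Rightarrow> 'a::banach" assumes "f summable_on UNIV"
  shows "(f \<circ> pr0) summable_on UNIV" "(f \<circ> pr1) summable_on UNIV" "(f \<circ> pr2) summable_on UNIV"
  using three_summable_parts[OF assms] pr_props by auto

lemma prod_summable:
  fixes a :: "nat \<Rightarrow> real"
  assumes "summable a" "\<And>i. a i \<ge> 0"
  shows "(\<lambda>(i,j). a i * a j) summable_on UNIV"
proof -
  have aa: "a summable_on UNIV" using assms summable_on_UNIV_nonneg_real_iff by blast
  have "(\<lambda>(i,j). a i * a j) summable_on Sigma UNIV (\<lambda>_. UNIV)"
  proof (rule summable_on_SigmaI)
    show "((\<lambda>j. case (i, j) of (i, j) \<Rightarrow> a i * a j) has_sum a i * infsum a UNIV) UNIV" for i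
      by (simp add: has_sum_cmult_right has_sum_infsum aa)
    show "(\<lambda>i. a i * infsum a UNIV) summable_on UNIV" by (rule summable_on_cmult_left[OF aa])
  qed (use assms in auto)
  then show ?thesis by simp
qed



definition toH :: "(nat \<Rightarrow> nat \<Rightarrow> real) \<Rightarrow> hv" where
  "toH w = Abs_hv (\<lambda>p. w (fst p) (snd p))"

lemma Htil_sqs: "w \<in> Htil \<longleftrightarrow> sqs (\<lambda>p. w (fst p) (snd p))"
  unfolding Htil_def sqs_def by (simp add: case_prod_unfold)

lemma vec_toH: "w \<in> Htil \<Longrightarrow> vec (toH w) = (\<lambda>p. w (fst p) (snd p))"
  unfolding toH_def by (simp add: vec_Abs Htil_sqs)

lemma Htil_norm_toH: "w \<in> Htil \<Longrightarrow> Htil_norm w = norm (toH w)"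
  unfolding Htil_norm_def norm_hv_def inner_hv_def
  by (simp add: vec_toH case_prod_unfold power2_eq_square)

lemma inner_toH: "w \<in> Htil \<Longrightarrow> w' \<in> Htil \<Longrightarrow>
    inner (toH w) (toH w') = infsum (\<lambda>p. w (fst p) (snd p) * w' (fst p) (snd p)) UNIV"
  by (simp add: inner_hv_def vec_toH)

lemma toH_vec: "toH (\<lambda>n j. vec u (n, j)) = u"
  unfolding toH_def by (simp add: vec_inverse)

lemma curry_vec_Htil: "(\<lambda>n j. vec u (n, j)) \<in> Htil"
  unfolding Htil_sqs using sqs_vec by simp

definition vT :: "(nat \<Rightarrow> nat \<Rightarrow> complex) \<Rightarrow> nat \<Rightarrow> nat \<Rightarrow> real" where
  "vT t n j = (if j = 0 then Re (t n n) else if odd j then 2 * Re (t n (n + (j+1) div 2))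
     else - 2 * Im (t n (n + (j+1) div 2)))"

lemma idx1: "(2*m+1+1) div 2 = Suc m" "(2*m+2+1) div 2 = Suc m" "odd (2*m+1)" "\<not> odd (2*m+2)"
  for m :: nat by presburger+

lemma vT_simps: "vT t n 0 = Re (t n n)" "vT t n (2*m+1) = 2 * Re (t n (n+m+1))"
  "vT t n (2*m+2) = - 2 * Im (t n (n+m+1))"
  unfolding vT_def using idx1[of m] by auto

lemma tilde_simps: "tilde x n 0 = (cmod (x n))^2"
  "tilde x n (2*m+1) = Re (cnj (x n) * x (n+m+1))"
  "tilde x n (2*m+2) = Im (cnj (x n) * x (n+m+1))"
  unfolding tilde_def using idx1[of m] by auto

lemma vT_simps2: "vT t n (Suc (2*m)) = 2 * Re (t n (Suc (n+m)))"
  "vT t n (Suc (Suc (2*m))) = - 2 * Im (t n (Suc (n+m)))"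
  using vT_simps(2,3)[of t n m] by simp_all

lemma tilde_simps2: "tilde x n (Suc (2*m)) = Re (cnj (x n) * x (Suc (n+m)))"
  "tilde x n (Suc (Suc (2*m))) = Im (cnj (x n) * x (Suc (n+m)))"
  using tilde_simps(2,3)[of x n m] by simp_all

lemma Re_sq_le: "(Re z)^2 \<le> (cmod z)^2"
  using abs_Re_le_cmod[of z] abs_le_square_iff[of "Re z" "cmod z"] by simp
lemma Im_sq_le: "(Im z)^2 \<le> (cmod z)^2"
  using abs_Im_le_cmod[of z] abs_le_square_iff[of "Im z" "cmod z"] by simp

lemma l2_summable_on: "x \<in> l2 \<Longrightarrow> (\<lambda>i. (cmod (x i))^2) summable_on UNIV"
  unfolding l2_def using summable_on_UNIV_nonneg_real_iff by auto

lemma l2_prod: assumes "x \<in> l2"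
  shows "(\<lambda>(i,j). (cmod (x i))^2 * (cmod (x j))^2) summable_on UNIV"
  using prod_summable[of "\<lambda>i. (cmod (x i))^2"] assms unfolding l2_def by auto

lemma tb0: "(tilde x n 0)^2 \<le> (cmod (x n))^2 * (cmod (x n))^2"
  by (simp only: tilde_simps power2_eq_square order.refl)
lemma tb1: "(tilde x n (2*m+1))^2 \<le> (cmod (x n))^2 * (cmod (x (n+m+1)))^2"
proof -
  have "(tilde x n (2*m+1))^2 = (Re (cnj (x n) * x (n+m+1)))^2" by (simp only: tilde_simps)
  also have "\<dots> \<le> (cmod (cnj (x n) * x (n+m+1)))^2" by (rule Re_sq_le)
  also have "\<dots> = (cmod (x n))^2 * (cmod (x (n+m+1)))^2" by (metis norm_mult complex_mod_cnj power_mult_distrib)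
  finally show ?thesis .
qed
lemma tb2: "(tilde x n (2*m+2))^2 \<le> (cmod (x n))^2 * (cmod (x (n+m+1)))^2"
proof -
  have "(tilde x n (2*m+2))^2 = (Im (cnj (x n) * x (n+m+1)))^2" by (simp only: tilde_simps)
  also have "\<dots> \<le> (cmod (cnj (x n) * x (n+m+1)))^2" by (rule Im_sq_le)
  also have "\<dots> = (cmod (x n))^2 * (cmod (x (n+m+1)))^2" by (metis norm_mult complex_mod_cnj power_mult_distrib)
  finally show ?thesis .
qed

lemma vb0: "(vT t n 0)^2 \<le> (cmod (t n n))^2"
  by (simp only: vT_simps Re_sq_le)
lemma vb1: "(vT t n (2*m+1))^2 \<le> 4 * (cmod (t n (n+m+1)))^2"
proof -
  have "(vT t n (2*m+1))^2 = 4 * (Re (t n (n+m+1)))^2" by (simp only: vT_simps) (simp add: power_mult_distrib)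
  also have "\<dots> \<le> 4 * (cmod (t n (n+m+1)))^2" using Re_sq_le by simp
  finally show ?thesis .
qed
lemma vb2: "(vT t n (2*m+2))^2 \<le> 4 * (cmod (t n (n+m+1)))^2"
proof -
  have "(vT t n (2*m+2))^2 = 4 * (Im (t n (n+m+1)))^2" by (simp only: vT_simps) (simp add: power_mult_distrib)
  also have "\<dots> \<le> 4 * (cmod (t n (n+m+1)))^2" using Im_sq_le by simp
  finally show ?thesis .
qed

lemma tilde_Htil: assumes x: "x \<in> l2" shows "tilde x \<in> Htil"
proof -
  let ?P = "\<lambda>(i,j). (cmod (x i))^2 * (cmod (x j))^2"
  note PP = pr_parts[OF l2_prod[OF x]]
  let ?f = "\<lambda>p. (tilde x (fst p) (snd p))^2"
  have "?f summable_on UNIV"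
  proof (rule bk_infsum[THEN conjunct1])
    show "(?f \<circ> bk0) summable_on UNIV"
    proof (rule summable_on_comparison_test[OF PP(1)])
      fix n show "(?f \<circ> bk0) n \<le> (?P \<circ> pr0) n" unfolding bk0_def pr0_def o_def using tb0[of x n] by (simp only: fst_conv snd_conv case_prod_conv)
    qed simp
    show "(?f \<circ> bk1) summable_on UNIV"
    proof (rule summable_on_comparison_test[OF PP(2)])
      fix p :: "nat \<times> nat" obtain n m where p: "p = (n, m)" by (cases p)
      show "(?f \<circ> bk1) p \<le> (?P \<circ> pr1) p" unfolding p bk1_def pr1_def o_def using tb1[of x n m] by (simp only: fst_conv snd_conv case_prod_conv)
    qed simp
    show "(?f \<circ> bk2) summable_on UNIV"
    proof (rule summable_on_comparison_test[OF PP(2)])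
      fix p :: "nat \<times> nat" obtain n m where p: "p = (n, m)" by (cases p)
      show "(?f \<circ> bk2) p \<le> (?P \<circ> pr1) p" unfolding p bk2_def pr1_def o_def using tb2[of x n m] by (simp only: fst_conv snd_conv case_prod_conv)
    qed simp
  qed
  then show ?thesis unfolding Htil_sqs sqs_def .
qed

lemma hs_summ: "hs_selfadjoint t \<Longrightarrow> (\<lambda>(i,j). (cmod (t i j))^2) summable_on UNIV"
  unfolding hs_selfadjoint_def by blast

lemmas hs_parts = pr_parts[OF hs_summ]

lemma vT_Htil: assumes t: "hs_selfadjoint t" shows "vT t \<in> Htil"
proof -
  let ?P = "\<lambda>(i,j). (cmod (t i j))^2"
  note PP = hs_parts[OF t]
  let ?f = "\<lambda>p. (vT t (fst p) (snd p))^2"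
  have "?f summable_on UNIV"
  proof (rule bk_infsum[THEN conjunct1])
    show "(?f \<circ> bk0) summable_on UNIV"
    proof (rule summable_on_comparison_test[OF PP(1)])
      fix n show "(?f \<circ> bk0) n \<le> (?P \<circ> pr0) n" unfolding bk0_def pr0_def o_def using vb0[of t n] by (simp only: fst_conv snd_conv case_prod_conv)
    qed simp
    show "(?f \<circ> bk1) summable_on UNIV"
    proof (rule summable_on_comparison_test[OF summable_on_cmult_right[OF PP(2), of 4]])
      fix p :: "nat \<times> nat" obtain n m where p: "p = (n, m)" by (cases p)
      show "(?f \<circ> bk1) p \<le> 4 * (?P \<circ> pr1) p" unfolding p bk1_def pr1_def o_def using vb1[of t n m] by (simp only: fst_conv snd_conv case_prod_conv)
    qed simp
    show "(?f \<circ> bk2) summable_on UNIV"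
    proof (rule summable_on_comparison_test[OF summable_on_cmult_right[OF PP(2), of 4]])
      fix p :: "nat \<times> nat" obtain n m where p: "p = (n, m)" by (cases p)
      show "(?f \<circ> bk2) p \<le> 4 * (?P \<circ> pr1) p" unfolding p bk2_def pr1_def o_def using vb2[of t n m] by (simp only: fst_conv snd_conv case_prod_conv)
    qed simp
  qed
  then show ?thesis unfolding Htil_sqs sqs_def .
qed



lemma two_mul_le: "2 * (a * b) \<le> a^2 + b^2" for a b :: real
  using sum_squares_bound[of a b] by simp

lemma quad_a_summable:
  assumes t: "hs_selfadjoint t" and x: "x \<in> l2"
  shows "(\<lambda>p. t (fst p) (snd p) * x (snd p) * cnj (x (fst p))) summable_on UNIV"
proof -
  have m: "(\<lambda>p. (cmod (t (fst p) (snd p)))^2 + (cmod (x (fst p)))^2 * (cmod (x (snd p)))^2) summable_on UNIV"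
    using summable_on_add[OF hs_summ[OF t] l2_prod[OF x]] by (simp add: case_prod_unfold)
  have "(\<lambda>p. norm (t (fst p) (snd p) * x (snd p) * cnj (x (fst p)))) summable_on UNIV"
  proof (rule summable_on_comparison_test[OF m])
    fix p :: "nat \<times> nat"
    have "2 * (cmod (t (fst p) (snd p)) * (cmod (x (fst p)) * cmod (x (snd p))))
          \<le> (cmod (t (fst p) (snd p)))^2 + (cmod (x (fst p)) * cmod (x (snd p)))^2"
      by (rule two_mul_le)
    moreover have "0 \<le> cmod (t (fst p) (snd p)) * (cmod (x (fst p)) * cmod (x (snd p)))" by simp
    moreover have "norm (t (fst p) (snd p) * x (snd p) * cnj (x (fst p))) =
        cmod (t (fst p) (snd p)) * (cmod (x (fst p)) * cmod (x (snd p)))"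
      by (simp only: norm_mult complex_mod_cnj mult_ac)
    ultimately show "norm (t (fst p) (snd p) * x (snd p) * cnj (x (fst p))) \<le>
        (cmod (t (fst p) (snd p)))^2 + (cmod (x (fst p)))^2 * (cmod (x (snd p)))^2"
      by (simp only: power_mult_distrib)
  qed simp
  then show ?thesis using summable_on_iff_abs_summable_on_complex by blast
qed

lemma row_summable:
  assumes t: "hs_selfadjoint t" and x: "x \<in> l2"
  shows "(\<lambda>j. t i j * x j) summable_on UNIV"
proof -
  have r: "(\<lambda>j. (cmod (t i j))^2) summable_on UNIV"
    using three_summable_parts[OF hs_summ[OF t], of "Pair i"] by (simp add: inj_def o_def)
  have m: "(\<lambda>j. (cmod (t i j))^2 + (cmod (x j))^2) summable_on UNIV"
    by (rule summable_on_add[OF r l2_summable_on[OF x]])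
  have "(\<lambda>j. norm (t i j * x j)) summable_on UNIV"
  proof (rule summable_on_comparison_test[OF m])
    fix j
    have "2 * (cmod (t i j) * cmod (x j)) \<le> (cmod (t i j))^2 + (cmod (x j))^2" by (rule two_mul_le)
    moreover have "0 \<le> cmod (t i j) * cmod (x j)" by simp
    ultimately show "norm (t i j * x j) \<le> (cmod (t i j))^2 + (cmod (x j))^2"
      by (simp only: norm_mult)
  qed simp
  then show ?thesis using summable_on_iff_abs_summable_on_complex by blast
qed

lemma infsum_nat_suminf:
  fixes f :: "nat \<Rightarrow> 'a::{topological_comm_monoid_add,t2_space}"
  assumes "f summable_on UNIV"
  shows "infsum f UNIV = suminf f"
  using has_sum_imp_sums[OF has_sum_infsum[OF assms]] by (simp add: sums_iff)

lemma quad_infsum: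
  assumes t: "hs_selfadjoint t" and x: "x \<in> l2"
  shows "quad_form t x = infsum (\<lambda>p. t (fst p) (snd p) * x (snd p) * cnj (x (fst p))) UNIV"
proof -
  define f where "f i j = t i j * x j * cnj (x i)" for i j
  have sa: "(\<lambda>(i,j). f i j) summable_on Sigma UNIV (\<lambda>_. UNIV)"
    using quad_a_summable[OF t x] by (simp add: f_def case_prod_unfold)
  have E: "infsum (\<lambda>i. infsum (f i) UNIV) UNIV = infsum (\<lambda>(i,j). f i j) (Sigma UNIV (\<lambda>_. UNIV))"
    by (rule infsum_Sigma'_banach[OF sa])
  have S: "(\<lambda>i. infsum (f i) UNIV) summable_on UNIV"
    by (rule summable_on_Sigma_banach[OF sa])
  have row: "infsum (f i) UNIV = suminf (\<lambda>j. t i j * x j) * cnj (x i)" for i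
  proof -
    have "infsum (f i) UNIV = infsum (\<lambda>j. t i j * x j) UNIV * cnj (x i)"
      unfolding f_def by (rule infsum_cmult_left')
    also have "\<dots> = suminf (\<lambda>j. t i j * x j) * cnj (x i)"
      by (simp add: infsum_nat_suminf[OF row_summable[OF t x]])
    finally show ?thesis .
  qed
  have "quad_form t x = suminf (\<lambda>i. infsum (f i) UNIV)"
    unfolding quad_form_def row ..
  also have "\<dots> = infsum (\<lambda>i. infsum (f i) UNIV) UNIV" by (rule infsum_nat_suminf[OF S, symmetric])
  also have "\<dots> = infsum (\<lambda>(i,j). f i j) (Sigma UNIV (\<lambda>_. UNIV))" by (rule E)
  finally show ?thesis by (simp add: f_def case_prod_unfold)
qed



lemma quad_identity:
  assumes t: "hs_selfadjoint t" and x: "x \<in> l2"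
  shows "quad_form t x = complex_of_real (infsum (\<lambda>p. vT t (fst p) (snd p) * tilde x (fst p) (snd p)) UNIV)"
proof -
  define a where "a p = t (fst p) (snd p) * x (snd p) * cnj (x (fst p))" for p
  have asum: "a summable_on UNIV" unfolding a_def by (rule quad_a_summable[OF t x])
  have Q: "quad_form t x = infsum a UNIV" unfolding a_def by (rule quad_infsum[OF t x])
  have herm: "t j i = cnj (t i j)" for i j using t unfolding hs_selfadjoint_def by blast
  have aswap: "a (j, i) = cnj (a (i, j))" for i j
    unfolding a_def fst_conv snd_conv herm[of j i] by (simp add: mult_ac)
  have Rsum: "(\<lambda>p. Re (a p)) summable_on UNIV" by (rule summable_on_Re[OF asum])
  have Isum: "(\<lambda>p. Im (a p)) summable_on UNIV" by (rule summable_on_Im[OF asum])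
  note RP = pr_parts[OF Rsum] and IP = pr_parts[OF Isum]
  have R: "Re (infsum a UNIV) = infsum ((\<lambda>p. Re (a p)) \<circ> pr0) UNIV + 2 * infsum ((\<lambda>p. Re (a p)) \<circ> pr1) UNIV"
  proof -
    have "Re (infsum a UNIV) = infsum (\<lambda>p. Re (a p)) UNIV" by (rule infsum_Re[OF asum, symmetric])
    also have "\<dots> = infsum ((\<lambda>p. Re (a p)) \<circ> pr0) UNIV + infsum ((\<lambda>p. Re (a p)) \<circ> pr1) UNIV
        + infsum ((\<lambda>p. Re (a p)) \<circ> pr2) UNIV"
      using pr_infsum[OF RP] by blast
    also have "((\<lambda>p. Re (a p)) \<circ> pr2) = ((\<lambda>p. Re (a p)) \<circ> pr1)"
    proof
      fix q :: "nat \<times> nat" obtain n m where q: "q = (n, m)" by (cases q)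
      show "((\<lambda>p. Re (a p)) \<circ> pr2) q = ((\<lambda>p. Re (a p)) \<circ> pr1) q"
        unfolding q pr1_def pr2_def o_def case_prod_conv aswap[of n "n+m+1"] by simp
    qed
    finally show ?thesis by linarith
  qed
  have I: "Im (infsum a UNIV) = 0"
  proof -
    have "Im (infsum a UNIV) = infsum (\<lambda>p. Im (a p)) UNIV" by (rule infsum_Im[OF asum, symmetric])
    also have "\<dots> = infsum ((\<lambda>p. Im (a p)) \<circ> pr0) UNIV + infsum ((\<lambda>p. Im (a p)) \<circ> pr1) UNIV
        + infsum ((\<lambda>p. Im (a p)) \<circ> pr2) UNIV"
      using pr_infsum[OF IP] by blast
    also have "((\<lambda>p. Im (a p)) \<circ> pr0) = (\<lambda>_. 0)"
    proof
      fix n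
      have an: "a (n, n) = cnj (a (n, n))" using aswap[of n n] .
      have "Im (a (n, n)) = - Im (a (n, n))" using arg_cong[OF an, of Im] by simp
      then show "((\<lambda>p. Im (a p)) \<circ> pr0) n = 0" by (simp add: pr0_def)
    qed
    also have "((\<lambda>p. Im (a p)) \<circ> pr2) = (\<lambda>q. - ((\<lambda>p. Im (a p)) \<circ> pr1) q)"
    proof
      fix q :: "nat \<times> nat" obtain n m where q: "q = (n, m)" by (cases q)
      show "((\<lambda>p. Im (a p)) \<circ> pr2) q = - ((\<lambda>p. Im (a p)) \<circ> pr1) q"
        unfolding q pr1_def pr2_def o_def case_prod_conv aswap[of n "n+m+1"] by simp
    qed
    finally show ?thesis by (simp add: infsum_uminus)
  qed
  define g where "g p = vT t (fst p) (snd p) * tilde x (fst p) (snd p)" for p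
  have gsum: "g summable_on UNIV"
    unfolding g_def using sqs_prod[OF vT_Htil[OF t, unfolded Htil_sqs] tilde_Htil[OF x, unfolded Htil_sqs]] .
  note GP = bk_parts[OF gsum]
  have G: "infsum g UNIV = infsum (g \<circ> bk0) UNIV + infsum (g \<circ> bk1) UNIV + infsum (g \<circ> bk2) UNIV"
    using bk_infsum[OF GP] by blast
  have G0: "g \<circ> bk0 = (\<lambda>p. Re (a p)) \<circ> pr0"
  proof
    fix n
    have "cmod (x n) * cmod (x n) = Re (x n) * Re (x n) + Im (x n) * Im (x n)" using cmod_power2[of "x n"] by (simp add: power2_eq_square)
    then show "(g \<circ> bk0) n = ((\<lambda>p. Re (a p)) \<circ> pr0) n"
      by (simp add: g_def bk0_def pr0_def a_def vT_simps tilde_simps mult.assoc power2_eq_square)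
  qed
  have G12: "(\<lambda>q. (g \<circ> bk1) q + (g \<circ> bk2) q) = (\<lambda>q. 2 * ((\<lambda>p. Re (a p)) \<circ> pr1) q)"
  proof
    fix q :: "nat \<times> nat"
    obtain n m where q: "q = (n, m)" by (cases q)
    define \<tau> where "\<tau> = t n (n+m+1)"
    define z where "z = cnj (x n) * x (n+m+1)"
    have "(g \<circ> bk1) q = 2 * Re \<tau> * Re z" unfolding q g_def bk1_def o_def \<tau>_def z_def
      by (simp only: fst_conv snd_conv case_prod_conv vT_simps tilde_simps)
    moreover have "(g \<circ> bk2) q = - 2 * Im \<tau> * Im z" unfolding q g_def bk2_def o_def \<tau>_def z_def
      by (simp only: fst_conv snd_conv case_prod_conv vT_simps tilde_simps)
    moreover have "((\<lambda>p. Re (a p)) \<circ> pr1) q = Re (\<tau> * z)" unfolding q a_def pr1_def o_def \<tau>_def z_def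
      by (simp only: fst_conv snd_conv case_prod_conv mult_ac)
    ultimately show "(g \<circ> bk1) q + (g \<circ> bk2) q = 2 * ((\<lambda>p. Re (a p)) \<circ> pr1) q"
      by (simp add: algebra_simps)
  qed
  have "infsum (g \<circ> bk1) UNIV + infsum (g \<circ> bk2) UNIV = infsum (\<lambda>q. (g \<circ> bk1) q + (g \<circ> bk2) q) UNIV"
    by (rule infsum_add[OF GP(2) GP(3), symmetric])
  also have "\<dots> = 2 * infsum ((\<lambda>p. Re (a p)) \<circ> pr1) UNIV"
    unfolding G12 by (rule infsum_cmult_right')
  finally have "infsum g UNIV = Re (infsum a UNIV)" using G G0 R by simp
  then show ?thesis using Q I unfolding g_def by (simp add: complex_eq_iff)
qed



definition tOf :: "(nat \<Rightarrow> nat \<Rightarrow> real) \<Rightarrow> nat \<Rightarrow> nat \<Rightarrow> complex" where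
  "tOf u i j = (if i = j then complex_of_real (u i 0)
     else if i < j then Complex (u i (2*(j-i)-1) / 2) (- u i (2*(j-i)) / 2)
     else Complex (u j (2*(i-j)-1) / 2) (u j (2*(i-j)) / 2))"

lemma tOf_simps: "tOf u n n = complex_of_real (u n 0)"
  "tOf u n (n+m+1) = Complex (u n (2*m+1) / 2) (- u n (2*m+2) / 2)"
  "tOf u (n+m+1) n = Complex (u n (2*m+1) / 2) (u n (2*m+2) / 2)"
proof -
  show "tOf u n n = complex_of_real (u n 0)" by (simp add: tOf_def)
  have e: "2 * (n + m + 1 - n) - 1 = 2*m+1" "2 * (n + m + 1 - n) = 2*m+2" by simp_all
  show "tOf u n (n+m+1) = Complex (u n (2*m+1) / 2) (- u n (2*m+2) / 2)"
    unfolding tOf_def using e by simp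
  show "tOf u (n+m+1) n = Complex (u n (2*m+1) / 2) (u n (2*m+2) / 2)"
    unfolding tOf_def using e by simp
qed

lemma tOf_herm: "tOf u j i = cnj (tOf u i j)"
  unfolding tOf_def by (auto simp: complex_eq_iff)

lemma vT_tOf: "vT (tOf u) = u"
proof (intro ext)
  fix n j
  show "vT (tOf u) n j = u n j"
  proof (cases "j = 0")
    case True then show ?thesis by (simp add: vT_simps tOf_simps)
  next
    case nz: False
    show ?thesis
    proof (cases "odd j")
      case True
      then obtain m where j: "j = 2*m+1" using oddE by blast
      show ?thesis unfolding j by (simp only: vT_simps tOf_simps) simp
    next
      case False
      then have j: "j = 2*((j-2) div 2)+2" using nz by presburger
      show ?thesis by (subst (1 2) j, simp only: vT_simps tOf_simps) simp
    qed
  qed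
qed

lemma tOf_hs: assumes u: "u \<in> Htil" shows "hs_selfadjoint (tOf u)"
  unfolding hs_selfadjoint_def
proof (intro conjI allI)
  show "tOf u j i = cnj (tOf u i j)" for i j by (rule tOf_herm)
  let ?U = "\<lambda>p. (u (fst p) (snd p))^2"
  have Us: "?U summable_on UNIV" using u unfolding Htil_sqs sqs_def .
  note UP = bk_parts[OF Us]
  let ?T = "\<lambda>p. (cmod (tOf u (fst p) (snd p)))^2"
  have s12: "(\<lambda>q. (1/4) * ((?U \<circ> bk1) q + (?U \<circ> bk2) q)) summable_on UNIV"
    by (intro summable_on_cmult_right summable_on_add UP)
  have "?T summable_on UNIV"
  proof (rule pr_infsum[THEN conjunct1])
    show "(?T \<circ> pr0) summable_on UNIV"
    proof (rule summable_on_comparison_test[OF UP(1)])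
      fix n show "(?T \<circ> pr0) n \<le> (?U \<circ> bk0) n" by (simp add: pr0_def bk0_def tOf_simps)
    qed simp
    show "(?T \<circ> pr1) summable_on UNIV"
    proof (rule summable_on_comparison_test[OF s12])
      fix q :: "nat \<times> nat" obtain n m where q: "q = (n, m)" by (cases q)
      have "(?T \<circ> pr1) q = (cmod (Complex (u n (2*m+1) / 2) (- u n (2*m+2) / 2)))^2"
        unfolding q pr1_def o_def by (simp only: fst_conv snd_conv case_prod_conv tOf_simps)
      also have "\<dots> = (1/4) * ((?U \<circ> bk1) q + (?U \<circ> bk2) q)"
        unfolding q bk1_def bk2_def o_def cmod_power2 by (simp add: power_divide)
      finally show "(?T \<circ> pr1) q \<le> (1/4) * ((?U \<circ> bk1) q + (?U \<circ> bk2) q)" by simp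
    qed simp
    show "(?T \<circ> pr2) summable_on UNIV"
    proof (rule summable_on_comparison_test[OF s12])
      fix q :: "nat \<times> nat" obtain n m where q: "q = (n, m)" by (cases q)
      have "(?T \<circ> pr2) q = (cmod (Complex (u n (2*m+1) / 2) (u n (2*m+2) / 2)))^2"
        unfolding q pr2_def o_def by (simp only: fst_conv snd_conv case_prod_conv tOf_simps)
      also have "\<dots> = (1/4) * ((?U \<circ> bk1) q + (?U \<circ> bk2) q)"
        unfolding q bk1_def bk2_def o_def cmod_power2 by (simp add: power_divide)
      finally show "(?T \<circ> pr2) q \<le> (1/4) * ((?U \<circ> bk1) q + (?U \<circ> bk2) q)" by simp
    qed simp
  qed
  then show "(\<lambda>(i, j). (cmod (tOf u i j))^2) summable_on UNIV" by (simp add: case_prod_unfold)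
qed

lemma vT_zero_imp:
  assumes t: "hs_selfadjoint t" and z: "\<And>n j. vT t n j = 0"
  shows "t i j = 0"
proof -
  have herm: "t j i = cnj (t i j)" for i j using t unfolding hs_selfadjoint_def by blast
  have up: "t i (i+m+1) = 0" for i m
    using z[of i "2*m+1"] z[of i "2*m+2"] by (simp only: vT_simps) (simp add: complex_eq_iff)
  consider "i = j" | "i < j" | "j < i" by linarith
  then show ?thesis
  proof cases
    case 1
    have "Re (t i i) = 0" using z[of i 0] by (simp only: vT_simps)
    moreover have "Im (t i i) = 0" using arg_cong[OF herm[of i i], of Im] by simp
    ultimately show ?thesis using 1 by (simp add: complex_eq_iff)
  next
    case 2
    then have "j = i + (j - i - 1) + 1" by simp
    then show ?thesis using up[of i "j - i - 1"] by metis
  next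
    case 3
    then have "i = j + (i - j - 1) + 1" by simp
    then have "t j i = 0" using up[of j "i - j - 1"] by metis
    then show ?thesis using herm[of j i] by simp
  qed
qed

lemma vec_sum: "vec (sum f F) p = (\<Sum>k\<in>F. vec (f k) p)"
  by (induction F rule: infinite_finite_induct) auto

lemma diff_norm:
  assumes v: "v \<in> Htil" and X: "\<And>k. X k \<in> l2"
  shows "Htil_norm (\<lambda>n j. v n j - (\<Sum>k\<in>F. c k * tilde (X k) n j)) =
     norm (toH v - (\<Sum>k\<in>F. c k *\<^sub>R toH (tilde (X k))))"
proof -
  let ?Y = "toH v - (\<Sum>k\<in>F. c k *\<^sub>R toH (tilde (X k)))"
  have "(\<lambda>n j. v n j - (\<Sum>k\<in>F. c k * tilde (X k) n j)) = (\<lambda>n j. vec ?Y (n, j))"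
    by (simp add: vec_sum vec_toH[OF v] vec_toH[OF tilde_Htil[OF X]])
  moreover have "Htil_norm (\<lambda>n j. vec ?Y (n, j)) = norm ?Y"
    by (metis Htil_norm_toH curry_vec_Htil toH_vec)
  ultimately show ?thesis by (simp only:)
qed



lemma inner_vT_tilde:
  assumes t: "hs_selfadjoint t" and x: "x \<in> l2"
  shows "quad_form t x = complex_of_real (inner (toH (vT t)) (toH (tilde x)))"
  unfolding inner_toH[OF vT_Htil[OF t] tilde_Htil[OF x]] by (rule quad_identity[OF t x])

lemma span_range_explicit:
  assumes "y \<in> span (range f)"
  shows "\<exists>F c. finite F \<and> y = (\<Sum>k\<in>F. c k *\<^sub>R f k)"
proof -
  obtain S r where S: "finite S" "S \<subseteq> range f" "y = (\<Sum>a\<in>S. r a *\<^sub>R a)"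
    using assms unfolding span_explicit by blast
  define g where "g = inv_into UNIV f"
  have fg: "f (g a) = a" if "a \<in> S" for a using S(2) that unfolding g_def by (auto intro: f_inv_into_f)
  have inj: "inj_on g S" by (metis fg inj_onI)
  have "(\<Sum>k\<in>g ` S. r (f k) *\<^sub>R f k) = (\<Sum>a\<in>S. r (f (g a)) *\<^sub>R f (g a))"
    by (rule sum.reindex[OF inj, unfolded o_def])
  also have "\<dots> = (\<Sum>a\<in>S. r a *\<^sub>R a)" by (rule sum.cong) (simp_all add: fg)
  finally show ?thesis using S by (intro exI[of _ "g ` S"] exI[of _ "\<lambda>k. r (f k)"]) auto
qed

theorem mainTheorem12:
  fixes X :: "nat \<Rightarrow> nat \<Rightarrow> complex"
  assumes "is_frame X"
  shows "injective_family X \<longleftrightarrow> closed_span_is_Htil X"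
proof
  have X: "\<And>k. X k \<in> l2" using assms unfolding is_frame_def by blast
  define f where "f k = toH (tilde (X k))" for k
  {
    assume inj: "injective_family X"
    show "closed_span_is_Htil X"
      unfolding closed_span_is_Htil_def
    proof (intro ballI allI impI)
      fix v e assume v: "v \<in> Htil" and e: "(e::real) > 0"
      have "toH v \<in> closure (span (range f))"
      proof (rule ccontr)
        assume "toH v \<notin> closure (span (range f))"
        then obtain u where u: "u \<noteq> 0" "\<And>b. b \<in> range f \<Longrightarrow> inner u b = 0"
          using exists_orth by blast
        define w where "w = (\<lambda>n j. vec u (n, j))"
        have w: "w \<in> Htil" unfolding w_def by (rule curry_vec_Htil)
        define t where "t = tOf w"
        have ht: "hs_selfadjoint t" unfolding t_def by (rule tOf_hs[OF w])
        have vt: "vT t = w" unfolding t_def by (rule vT_tOf)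
        have "quad_form t (X k) = 0" for k
        proof -
          have "quad_form t (X k) = complex_of_real (inner (toH w) (f k))"
            unfolding f_def using inner_vT_tilde[OF ht X] vt by simp
          also have "toH w = u" unfolding w_def by (rule toH_vec)
          finally show ?thesis using u(2)[of "f k"] by simp
        qed
        then have t0: "t i j = 0" for i j using inj ht unfolding injective_family_def by blast
        have "u = 0"
        proof (rule hv_eqI)
          fix p :: "nat \<times> nat"
          have "vec u p = w (fst p) (snd p)" unfolding w_def by simp
          also have "\<dots> = vT t (fst p) (snd p)" using vt by simp
          also have "\<dots> = 0" unfolding vT_def using t0 by simp
          finally show "vec u p = vec 0 p" by simp
        qed
        then show False using u(1) by simp
      qed
      then obtain y where y: "y \<in> span (range f)" "dist y (toH v) < e"
        using e closure_approachable by blast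
      obtain F c where Fc: "finite F" "y = (\<Sum>k\<in>F. c k *\<^sub>R f k)"
        using span_range_explicit[OF y(1)] by blast
      have "Htil_norm (\<lambda>n j. v n j - (\<Sum>k\<in>F. c k * tilde (X k) n j)) = norm (toH v - y)"
        unfolding Fc(2) f_def by (rule diff_norm[OF v X])
      also have "\<dots> < e" using y(2) by (simp add: dist_norm norm_minus_commute)
      finally show "\<exists>F c. finite F \<and> Htil_norm (\<lambda>n j. v n j - (\<Sum>k\<in>F. c k * tilde (X k) n j)) < e"
        using Fc(1) by blast
    qed
  }
  {
    assume cs: "closed_span_is_Htil X"
    show "injective_family X"
      unfolding injective_family_def
    proof (rule allI, rule impI)
      fix t assume h: "hs_selfadjoint t \<and> (\<forall>k. quad_form t (X k) = 0)"
      then have ht: "hs_selfadjoint t" and q: "\<And>k. quad_form t (X k) = 0" by auto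
      define w where "w = vT t"
      have w: "w \<in> Htil" unfolding w_def by (rule vT_Htil[OF ht])
      define W where "W = toH w"
      have ortho: "inner W (f k) = 0" for k
        using inner_vT_tilde[OF ht X, of k] q[of k] unfolding W_def w_def f_def by simp
      have W0: "W = 0"
      proof (rule ccontr)
        assume "W \<noteq> 0"
        then have nW: "norm W > 0" by simp
        obtain F c where Fc: "finite F" "Htil_norm (\<lambda>n j. w n j - (\<Sum>k\<in>F. c k * tilde (X k) n j)) < norm W"
          using cs w nW unfolding closed_span_is_Htil_def by blast
        define Y where "Y = (\<Sum>k\<in>F. c k *\<^sub>R f k)"
        have lt: "norm (W - Y) < norm W"
          using Fc(2) unfolding diff_norm[OF w X] W_def Y_def f_def .
        have iY: "inner W Y = 0" unfolding Y_def by (simp add: inner_sum_right ortho)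
        have "(norm W)^2 = inner W (W - Y)" by (simp add: power2_norm_eq_inner inner_diff_right iY)
        also have "\<dots> \<le> norm W * norm (W - Y)" by (rule Cauchy_Schwarz_ineq2[THEN order.trans[OF abs_ge_self]])
        also have "\<dots> < norm W * norm W" using lt nW by simp
        finally show False by (simp add: power2_eq_square)
      qed
      have "vT t n j = 0" for n j
      proof -
        have "vT t n j = vec W (n, j)" unfolding W_def w_def by (simp add: vec_toH[OF vT_Htil[OF ht]])
        then show ?thesis using W0 by simp
      qed
      then show "\<forall>i j. t i j = 0" using vT_zero_imp[OF ht] by blast
    qed
  }
qed


end
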